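(* Let $0<q<1$, let $z\in\mathbb{C}$ with $\Re z>0$, let $m\ge 1$ be an integer, and let $s\in\mathbb{C}$ with $\Re s>0$. Then $$\zeta(s,z:q)=-\frac{(q-q^2)^s}{s\log q}F(s,s,s+1:q^z)+\frac12\Big(\frac{q-q^2}{1-q^z}\Big)^s+s\Big(\frac{q-q^2}{1-q^z}\Big)^s\sum_{k=1}^{m}\frac{B_{2k}}{(2k)!}\Big(\frac{\log q}{q^z-1}\Big)^{2k-1}P_{2k-1}(q^z;s)-R_{2m}(s,z:q),$$ where $$R_{2m}(s,z:q)=s\int_0^\infty\frac{\overline{B}_{2m}(t)}{(2m)!}\Big(\frac{\log q}{q^{t+z}-1}\Big)^{2m}\Big(\frac{1-q}{1-q^{t+z}}\Big)^s q^{s(t+1)}P_{2m}(q^{t+z};s)\,dt.$$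
   Context: $[x]_q=\frac{1-q^x}{1-q}$ and $\zeta(s,z:q)=\sum_{k=0}^{\infty}q^{s(k+1)}/[k+z]_q^{\,s}$ (convergent for $\Re s>0$), complex powers taken with the principal branch. $F(\alpha,\beta,\gamma:x)$ is the Gauss hypergeometric function ${}_2F_1(\alpha,\beta;\gamma;x)$. $B_k$ are the Bernoulli numbers and $B_n(t)$ the Bernoulli polynomials, defined by $\frac{ze^{tz}}{e^z-1}=\sum_{n\ge0}\frac{B_n(t)}{n!}z^n$, $B_k=B_k(0)$; $\overline{B}_n(t)=B_n(t-\lfloor t\rfloor)$ is the periodic extension. The polynomials $P_k(x;s)$ are defined by $P_0(x;s)=\frac1s$, $P_1(x;s)=1$, and $P_{k+1}(x;s)=(x-x^2)\frac{\partial}{\partial x}P_k(x;s)+(kx+s)P_k(x;s)$. *)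

theory Defs
  imports "HOL-Analysis.Analysis" "HOL-Computational_Algebra.Formal_Power_Series"
          "HOL-Computational_Algebra.Polynomial"
begin

definition qnum :: "real \<Rightarrow> complex \<Rightarrow> complex" where
  "qnum q x = (1 - of_real q powr x) / (1 - of_real q)"

definition qzeta :: "complex \<Rightarrow> complex \<Rightarrow> real \<Rightarrow> complex" where
  "qzeta s z q = (\<Sum>k. of_real q powr (s * of_nat (k + 1)) / (qnum q (of_nat k + z)) powr s)"

definition hyp2F1 :: "complex \<Rightarrow> complex \<Rightarrow> complex \<Rightarrow> complex \<Rightarrow> complex" where
  "hyp2F1 a b c x = (\<Sum>n. pochhammer a n * pochhammer b n / (pochhammer c n * of_nat (fact n)) * x ^ n)"

definition bernpoly :: "nat \<Rightarrow> real \<Rightarrow> real" where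
  "bernpoly n t = fact n * fps_nth (fps_X * fps_exp t / (fps_exp 1 - 1)) n"

definition bernnum :: "nat \<Rightarrow> real" where
  "bernnum k = bernpoly k 0"

definition pbernpoly :: "nat \<Rightarrow> real \<Rightarrow> real" where
  "pbernpoly n t = bernpoly n (t - of_int \<lfloor>t\<rfloor>)"

fun Ppoly :: "nat \<Rightarrow> complex \<Rightarrow> complex poly" where
  "Ppoly 0 s = [:1 / s:]"
| "Ppoly (Suc 0) s = [:1:]"
| "Ppoly (Suc (Suc k)) s =
     [:0, 1, -1:] * pderiv (Ppoly (Suc k) s) + [:s, of_nat (Suc k):] * Ppoly (Suc k) s"

definition Rrem :: "nat \<Rightarrow> complex \<Rightarrow> complex \<Rightarrow> real \<Rightarrow> complex" where
  "Rrem m s z q = s * integral {0..} (\<lambda>t::real.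
      of_real (pbernpoly (2*m) t / fact (2*m))
      * (of_real (ln q) / (of_real q powr (of_real t + z) - 1)) ^ (2*m)
      * ((1 - of_real q) / (1 - of_real q powr (of_real t + z))) powr s
      * of_real q powr (s * (of_real t + 1))
      * poly (Ppoly (2*m) s) (of_real q powr (of_real t + z)))"

end

theory Submission
  imports Defs
begin

definition bg :: "nat \<Rightarrow> real" where
  "bg i = fps_nth (fps_X / (fps_exp 1 - 1)) i"

lemma D_nz: "(fps_exp (1::real) - 1) \<noteq> 0"
proof
  assume "fps_exp (1::real) - 1 = 0"
  then have "fps_nth (fps_exp (1::real) - 1) 1 = 0" by simp
  then show False by simp
qed

lemma D_subdeg: "subdegree (fps_exp (1::real) - 1) = 1"
proof (rule subdegreeI)
  show "fps_nth (fps_exp (1::real) - 1) 1 \<noteq> 0" by simp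
  fix i :: nat assume "i < 1" then show "fps_nth (fps_exp (1::real) - 1) i = 0" by simp
qed

lemma g_mult: "(fps_X / (fps_exp 1 - 1)) * (fps_exp (1::real) - 1) = fps_X"
  by (rule fps_times_divide_eq) (use D_nz D_subdeg in auto)

lemma bp_fps: "fps_X * fps_exp t / (fps_exp 1 - 1) = (fps_X / (fps_exp 1 - 1)) * fps_exp (t::real)"
  by (rule fps_divide_times2) (simp only: D_subdeg, simp)

lemma bernpoly_sum: "bernpoly n t = (\<Sum>i\<le>n. fact n * bg i * t ^ (n - i) / fact (n - i))"
  unfolding bernpoly_def bp_fps fps_mult_nth bg_def
  by (simp add: atLeast0AtMost sum_distrib_left mult_ac)


lemma bernpoly_fps: "bernpoly n t = fact n * fps_nth ((fps_X / (fps_exp 1 - 1)) * fps_exp t) n"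
  unfolding bernpoly_def bp_fps ..

lemma g_mult_nth: "(\<Sum>i=0..n. bg i * fps_nth (fps_exp (1::real) - 1) (n - i)) = (if n = 1 then 1 else 0)"
proof -
  have "fps_nth ((fps_X / (fps_exp 1 - 1)) * (fps_exp (1::real) - 1)) n = (if n = 1 then 1 else 0)"
    by (simp add: g_mult)
  then show ?thesis unfolding fps_mult_nth bg_def .
qed

lemma bg0: "bg 0 = 1"
  using g_mult_nth[of 1] by simp

lemma bg1: "bg 1 = -1/2"
proof -
  have "(\<Sum>i=0..2. bg i * fps_nth (fps_exp (1::real) - 1) (2 - i)) = 0"
    using g_mult_nth[of 2] by simp
  then have "bg 0 * fps_nth (fps_exp (1::real) - 1) 2 + bg 1 * fps_nth (fps_exp (1::real) - 1) 1 + bg 2 * fps_nth (fps_exp (1::real) - 1) 0 = 0"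
    by (simp add: numeral_2_eq_2 atLeast0_atMost_Suc)
  moreover have "fps_nth (fps_exp (1::real) - 1) 2 = 1/2" by (simp add: fact_numeral)
  moreover have "fps_nth (fps_exp (1::real) - 1) 1 = 1" by simp
  moreover have "fps_nth (fps_exp (1::real) - 1) 0 = 0" by simp
  ultimately have "bg 0 * (1/2) + bg 1 = 0" by simp
  then show ?thesis using bg0 by linarith
qed

lemma bernpoly_diff: "bernpoly n 1 - bernpoly n 0 = (if n = 1 then 1 else 0)"
proof -
  have "bernpoly n 1 - bernpoly n 0 = fact n * fps_nth ((fps_X / (fps_exp 1 - 1)) * (fps_exp 1 - 1)) n"
    unfolding bernpoly_fps by (simp add: algebra_simps)
  also have "\<dots> = (if n = 1 then 1 else 0)" by (simp add: g_mult)
  finally show ?thesis .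
qed

lemma bernpoly_1_0: "n \<noteq> 1 \<Longrightarrow> bernpoly n 1 = bernpoly n 0"
  using bernpoly_diff[of n] by simp

lemma bernpoly_0: "bernpoly 0 t = 1"
  by (simp add: bernpoly_sum bg0)

lemma bernpoly_1: "bernpoly 1 t = t - 1/2"
  using bg1 by (simp add: bernpoly_sum bg0)

lemma bernpoly_deriv: "((\<lambda>t. bernpoly (Suc n) t) has_real_derivative (of_nat (Suc n) * bernpoly n t)) (at t)"
proof -
  have "((\<lambda>t. \<Sum>i\<le>Suc n. fact (Suc n) * bg i * t ^ (Suc n - i) / fact (Suc n - i)) has_real_derivative
     (\<Sum>i\<le>Suc n. fact (Suc n) * bg i * (of_nat (Suc n - i) * t ^ (Suc n - i - 1)) / fact (Suc n - i))) (at t)"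
    by (rule DERIV_sum, auto intro!: derivative_eq_intros)
  also have "(\<Sum>i\<le>Suc n. fact (Suc n) * bg i * (of_nat (Suc n - i) * t ^ (Suc n - i - 1)) / fact (Suc n - i))
     = (\<Sum>i\<le>n. fact (Suc n) * bg i * (of_nat (Suc n - i) * t ^ (Suc n - i - 1)) / fact (Suc n - i))"
    by (subst sum.atMost_Suc) simp
  also have "\<dots> = (\<Sum>i\<le>n. of_nat (Suc n) * (fact n * bg i * t ^ (n - i) / fact (n - i)))"
  proof (rule sum.cong)
    fix i assume "i \<in> {..n}"
    then have i: "i \<le> n" by simp
    then have e: "Suc n - i = Suc (n - i)" by simp
    have "fact (Suc n) * bg i * (of_nat (Suc k) * t ^ (Suc k - 1)) / fact (Suc k)
        = of_nat (Suc n) * (fact n * bg i * t ^ k / fact k)" for k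
    proof -
      have "fact (Suc k) = (of_nat (Suc k) :: real) * fact k" by (rule fact_Suc)
      moreover have "fact (Suc n) = (of_nat (Suc n) :: real) * fact n" by (rule fact_Suc)
      moreover have "(of_nat (Suc k) :: real) \<noteq> 0" by auto
      moreover have "\<And>(A::real) c d e. c \<noteq> 0 \<Longrightarrow> A * (c * d) / (c * e) = A * d / e" by simp
      ultimately show ?thesis by (simp del: of_nat_Suc)
    qed
    then show "fact (Suc n) * bg i * (of_nat (Suc n - i) * t ^ (Suc n - i - 1)) / fact (Suc n - i)
        = of_nat (Suc n) * (fact n * bg i * t ^ (n - i) / fact (n - i))"
      unfolding e .
  qed simp
  also have "\<dots> = of_nat (Suc n) * bernpoly n t"
    by (simp add: bernpoly_sum sum_distrib_left)
  finally show ?thesis by (simp only: bernpoly_sum)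
qed

definition reflf :: "real fps \<Rightarrow> real fps" where
  "reflf f = Abs_fps (\<lambda>n. (-1)^n * fps_nth f n)"

lemma reflf_nth: "fps_nth (reflf f) n = (-1)^n * fps_nth f n"
  by (simp add: reflf_def)

lemma reflf_mult: "reflf (f * g) = reflf f * reflf g"
proof (rule fps_ext)
  fix n
  have "fps_nth (reflf (f * g)) n = (\<Sum>i=0..n. (-1)^n * (fps_nth f i * fps_nth g (n - i)))"
    by (simp add: reflf_nth fps_mult_nth sum_distrib_left)
  also have "\<dots> = (\<Sum>i=0..n. ((-1)^i * fps_nth f i) * ((-1)^(n-i) * fps_nth g (n - i)))"
  proof (rule sum.cong)
    fix i assume "i \<in> {0..n}"
    then have "(-1::real)^n = (-1)^i * (-1)^(n-i)" by (simp add: power_add[symmetric])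
    then show "(-1)^n * (fps_nth f i * fps_nth g (n - i)) = ((-1)^i * fps_nth f i) * ((-1)^(n-i) * fps_nth g (n - i))"
      by simp
  qed simp
  also have "\<dots> = fps_nth (reflf f * reflf g) n"
    by (simp add: reflf_nth fps_mult_nth)
  finally show "fps_nth (reflf (f * g)) n = fps_nth (reflf f * reflf g) n" .
qed

lemma reflf_diff: "reflf (f - g) = reflf f - reflf g"
  by (rule fps_ext) (simp add: reflf_nth algebra_simps)

lemma reflf_one: "reflf 1 = 1"
  by (rule fps_ext) (simp add: reflf_nth)

lemma reflf_X: "reflf fps_X = - fps_X"
  by (rule fps_ext) (simp add: reflf_nth)

lemma reflf_exp: "reflf (fps_exp 1) = fps_exp (-1)"
  by (rule fps_ext) (simp add: reflf_nth power_minus')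

lemma reflf_g: "reflf (fps_X / (fps_exp 1 - 1)) = fps_X / (fps_exp 1 - 1) + fps_X"
proof -
  define g where "g = fps_X / (fps_exp (1::real) - 1)"
  define E where "E = fps_exp (1::real)"
  have gm: "g * (E - 1) = fps_X" unfolding g_def E_def by (rule g_mult)
  have EE: "E * fps_exp (-1) = 1" unfolding E_def
    by (simp add: fps_exp_add_mult[symmetric])
  have "reflf g * (fps_exp (-1) - 1) = - fps_X"
    using arg_cong[OF gm, of reflf] by (simp add: reflf_mult reflf_diff reflf_one reflf_X reflf_exp E_def)
  then have "reflf g * (fps_exp (-1) - 1) * E = - fps_X * E" by simp
  moreover have "reflf g * (fps_exp (-1) - 1) * E = reflf g * (E * fps_exp (-1)) - reflf g * E"
    by (simp add: algebra_simps)
  moreover have "E * (reflf g * fps_exp (-1)) = reflf g" using EE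
    by (metis mult.left_commute mult.right_neutral)
  ultimately have "reflf g * (1 - E) = - fps_X * E"
    by (simp add: algebra_simps)
  then have "reflf g * (E - 1) = fps_X * E" by (simp add: algebra_simps)
  also have "\<dots> = fps_X * (E - 1) + g * (E - 1)" using gm by (simp add: algebra_simps)
  finally have "(reflf g - (fps_X + g)) * (E - 1) = 0" by (simp add: algebra_simps)
  moreover have "E - 1 \<noteq> 0" unfolding E_def by (rule D_nz)
  ultimately have "reflf g = fps_X + g" by simp
  then show ?thesis unfolding g_def E_def by simp
qed

lemma bg_odd: "odd n \<Longrightarrow> n \<noteq> 1 \<Longrightarrow> bg n = 0"
proof -
  assume n: "odd n" "n \<noteq> 1"
  have "fps_nth (reflf (fps_X / (fps_exp 1 - 1))) n = fps_nth (fps_X / (fps_exp 1 - 1) + fps_X) n"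
    by (simp only: reflf_g)
  then have "- bg n = bg n" using n by (simp add: reflf_nth bg_def)
  then show ?thesis by simp
qed

lemma bernnum_bg: "bernnum n = fact n * bg n"
proof -
  have "(\<Sum>i\<le>n. fact n * bg i * 0 ^ (n - i) / fact (n - i)) = (\<Sum>i\<le>n. (if i = n then fact n * bg n else 0))"
    by (rule sum.cong) auto
  then show ?thesis by (simp add: bernnum_def bernpoly_sum)
qed

lemma bernnum_odd: "odd n \<Longrightarrow> n \<noteq> 1 \<Longrightarrow> bernnum n = 0"
  by (simp add: bernnum_bg bg_odd)

lemma cpow_real: "0 < q \<Longrightarrow> complex_of_real q powr w = exp (w * of_real (ln q))"
  by (simp add: powr_def Ln_of_real)

lemma Re_pos_not_nonpos: "0 < Re u \<Longrightarrow> u \<notin> \<real>\<^sub>\<le>\<^sub>0"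
  by (auto simp: complex_nonpos_Reals_iff)

lemma inv_powr: "0 < Re u \<Longrightarrow> (inverse u) powr s = u powr (-s)"
proof -
  assume u: "0 < Re u"
  then have "u \<noteq> 0" by auto
  then have "inverse u \<noteq> 0" by simp
  then show ?thesis using u \<open>u \<noteq> 0\<close>
    by (simp add: powr_def Ln_inverse[OF Re_pos_not_nonpos[OF u]])
qed

lemma div_powr: "0 < c \<Longrightarrow> 0 < Re u \<Longrightarrow> (complex_of_real c / u) powr s = of_real c powr s * u powr (-s)"
proof -
  assume c: "0 < c" and u: "0 < Re u"
  have "(complex_of_real c / u) powr s = (of_real c * inverse u) powr s" by (simp add: divide_inverse)
  also have "\<dots> = of_real c powr s * (inverse u) powr s"
    by (rule powr_times_real_left) (use c in auto)
  also have "\<dots> = of_real c powr s * u powr (-s)" by (simp add: inv_powr[OF u])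
  finally show ?thesis .
qed

lemma div_powr_inv: "0 < c \<Longrightarrow> 0 < Re u \<Longrightarrow> 1 / ((u / complex_of_real c) powr s) = (of_real c / u) powr s"
proof -
  assume c: "0 < c" and u: "0 < Re u"
  have Ru: "0 < Re (u / complex_of_real c)" using c u by (simp add: Re_divide_of_real)
  then have nz: "u / complex_of_real c \<noteq> 0" by auto
  have "(of_real c / u) = inverse (u / complex_of_real c)" by simp
  then have "(of_real c / u) powr s = (u / complex_of_real c) powr (-s)"
    using inv_powr[OF Ru] by simp
  also have "\<dots> = 1 / ((u / complex_of_real c) powr s)"
    by (simp add: powr_minus divide_inverse)
  finally show ?thesis by simp
qed

lemma alg1: "(u::complex) \<noteq> 0 \<Longrightarrow> c \<noteq> 0 \<Longrightarrow>
  s * (P * u / c) * (c * ((1 - u) * L) / u^2) * E + E * (s * L) * P = P * E * s * L / u"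
  by (simp add: field_simps power2_eq_square)

lemma alg2:
  fixes x L s Fv P P' :: complex
  assumes x: "x \<noteq> 1"
  shows "(-1)^j * s * ((Fv * s * L / (1 - x) * (L/(x-1))^j + of_nat j * (L/(x-1))^(j-1) * (- L * (x * L)/(x-1)^2) * Fv) * P + P' * (x * L) * (Fv * (L/(x-1))^j))
 = (-1)^(Suc j) * s * Fv * (L/(x-1))^(Suc j) * ((x - x^2) * P' + (s + of_nat j * x) * P)"
proof -
  define d where "d = x - 1"
  have d: "d \<noteq> 0" using x by (simp add: d_def)
  have xd: "x = 1 + d" "1 - x = - d" by (simp_all add: d_def)
  show ?thesis
  proof (cases j)
    case 0
    show ?thesis unfolding xd(2) d_def[symmetric] using 0 d by (simp add: xd field_simps power2_eq_square)
  next
    case (Suc i)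
    show ?thesis unfolding xd(2) d_def[symmetric] using d
      by (simp add: Suc xd field_simps power2_eq_square)
  qed
qed

lemma Ppoly_rec: "s \<noteq> 0 \<Longrightarrow> Ppoly (Suc j) s = [:0, 1, -1:] * pderiv (Ppoly j s) + [:s, of_nat j:] * Ppoly j s"
  by (cases j) simp_all

lemma poly_Ppoly_Suc: "s \<noteq> 0 \<Longrightarrow> poly (Ppoly (Suc j) s) x =
   (x - x^2) * poly (pderiv (Ppoly j s)) x + (s + of_nat j * x) * poly (Ppoly j s) x"
  by (simp add: Ppoly_rec algebra_simps power2_eq_square)

lemma norm_pochhammer_le: "norm (pochhammer (s::complex) n) \<le> pochhammer (norm s) n"
proof (induction n)
  case 0 then show ?case by simp
next
  case (Suc n)
  have "norm (pochhammer s (Suc n)) = norm (pochhammer s n) * norm (s + of_nat n)"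
    by (simp add: pochhammer_Suc norm_mult)
  also have "\<dots> \<le> pochhammer (norm s) n * (norm s + of_nat n)"
  proof (rule mult_mono[OF Suc.IH])
    show "norm (s + of_nat n) \<le> norm s + of_nat n"
      using norm_triangle_ineq[of s "of_nat n"] by simp
  qed (auto simp: pochhammer_prod intro!: prod_nonneg)
  also have "\<dots> = pochhammer (norm s) (Suc n)" by (simp add: pochhammer_Suc)
  finally show ?case .
qed

lemma summable_poch_real: "0 \<le> r \<Longrightarrow> r < 1 \<Longrightarrow> summable (\<lambda>n. pochhammer (a::real) n / fact n * r^n)"
proof -
  assume r: "0 \<le> r" "r < 1"
  have "(\<lambda>n. ((-a) gchoose n) * (-r)^n) sums (1 + -r) powr (-a)"
    by (rule gen_binomial_real) (use r in auto)
  moreover have "((-a) gchoose n) * (-r)^n = pochhammer a n / fact n * r^n" for n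
  proof -
    have "((-a) gchoose n) * (-r)^n = ((-1)^n * (-1)^n) * (pochhammer a n / fact n * r^n)"
      by (simp add: gbinomial_pochhammer power_minus[of r] mult_ac)
    also have "(-1::real)^n * (-1)^n = 1" by (simp add: power_add[symmetric])
    finally show ?thesis by simp
  qed
  ultimately show ?thesis by (simp add: sums_iff)
qed

lemma summable_poch: "0 \<le> r \<Longrightarrow> r < 1 \<Longrightarrow> summable (\<lambda>n. norm (pochhammer (s::complex) n / fact n) * r^n)"
proof -
  assume r: "0 \<le> r" "r < 1"
  show ?thesis
  proof (rule summable_comparison_test'[OF summable_poch_real[OF r, of "norm s"]])
    fix n :: nat
    have "norm (norm (pochhammer s n / fact n) * r^n) = norm (pochhammer s n) / fact n * r^n"
      using r by (simp add: norm_divide abs_mult)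
    also have "\<dots> \<le> pochhammer (norm s) n / fact n * r^n"
      using r by (intro mult_right_mono divide_right_mono norm_pochhammer_le) auto
    finally show "norm (norm (pochhammer s n / fact n) * r^n) \<le> pochhammer (norm s) n / fact n * r^n" .
  qed
qed

locale qzl =
  fixes q :: real and z s :: complex
  assumes q0: "0 < q" and q1: "q < 1" and z0: "0 < Re z" and s0: "0 < Re s"
begin

definition "Lc = complex_of_real (ln q)"
definition "X w = exp ((w + z) * Lc)"
definition "F w = (complex_of_real (1 - q) / (1 - X w)) powr s * exp (s * (w + 1) * Lc)"
definition "Dc j w = (-1)^j * s * F w * (Lc / (X w - 1))^j * poly (Ppoly j s) (X w)"
definition "U = {w. 0 < Re w + Re z}"

lemma lnq: "ln q < 0" using q0 q1 by simp

lemma s_nz: "s \<noteq> 0" using s0 by auto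

lemma norm_X: "norm (X w) = exp ((Re w + Re z) * ln q)"
  by (simp add: X_def Lc_def)

lemma X_lt1: "w \<in> U \<Longrightarrow> norm (X w) < 1"
  unfolding norm_X U_def using lnq by (simp add: mult_pos_neg)

lemma Re_1mX: "w \<in> U \<Longrightarrow> 0 < Re (1 - X w)"
proof -
  assume "w \<in> U"
  then have "norm (X w) < 1" by (rule X_lt1)
  moreover have "Re (X w) \<le> norm (X w)" by (rule complex_Re_le_cmod)
  ultimately show ?thesis by simp
qed

lemma X_ne1: "w \<in> U \<Longrightarrow> X w \<noteq> 1"
  using Re_1mX by force

lemma open_U: "open U"
proof -
  have "U = {w. - Re z < Re w}" unfolding U_def by auto
  then show ?thesis by (simp add: open_halfspace_Re_gt)
qed

lemma Re_cq: "w \<in> U \<Longrightarrow> 0 < Re (complex_of_real (1 - q) / (1 - X w))"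
proof -
  assume w: "w \<in> U"
  have "Re (complex_of_real (1 - q) / (1 - X w)) = (1 - q) * Re (1 - X w) / (cmod (1 - X w))^2"
    by (simp add: Re_divide cmod_power2)
  moreover have "1 - X w \<noteq> 0" using X_ne1[OF w] by simp
  ultimately show ?thesis using Re_1mX[OF w] q1 by (simp add: divide_pos_pos)
qed

lemma F_deriv: "w \<in> U \<Longrightarrow> (F has_field_derivative (F w * s * Lc / (1 - X w))) (at w)"
proof -
  assume w: "w \<in> U"
  define c where "c = complex_of_real (1 - q)"
  have c: "c \<noteq> 0" using q1 by (simp add: c_def)
  have nz: "1 - X w \<noteq> 0" using X_ne1[OF w] by simp
  have Xd: "(X has_field_derivative X w * Lc) (at w)"
    unfolding X_def by (auto intro!: derivative_eq_intros)
  have ud: "((\<lambda>w. c / (1 - X w)) has_field_derivative c * (X w * Lc) / (1 - X w)^2) (at w)"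
    using nz by (auto intro!: derivative_eq_intros Xd simp: power2_eq_square)
  have nn: "c / (1 - X w) \<notin> \<real>\<^sub>\<le>\<^sub>0" using Re_cq[OF w] unfolding c_def by (rule Re_pos_not_nonpos)
  have pd: "((\<lambda>w. (c / (1 - X w)) powr s) has_field_derivative
     (s * (c / (1 - X w)) powr (s - 1)) * (c * (X w * Lc) / (1 - X w)^2)) (at w)"
    by (rule DERIV_chain2[OF has_field_derivative_powr[OF nn] ud])
  have ed: "((\<lambda>w. exp (s * (w + 1) * Lc)) has_field_derivative exp (s * (w + 1) * Lc) * (s * Lc)) (at w)"
    by (auto intro!: derivative_eq_intros)
  have "(F has_field_derivative (s * (c / (1 - X w)) powr (s - 1)) * (c * (X w * Lc) / (1 - X w)^2)
      * exp (s * (w + 1) * Lc) + (exp (s * (w + 1) * Lc) * (s * Lc)) * (c / (1 - X w)) powr s) (at w)"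
    unfolding F_def c_def[symmetric] by (rule DERIV_mult[OF pd ed])
  moreover have "(s * (c / (1 - X w)) powr (s - 1)) * (c * (X w * Lc) / (1 - X w)^2)
      * exp (s * (w + 1) * Lc) + (exp (s * (w + 1) * Lc) * (s * Lc)) * (c / (1 - X w)) powr s
     = F w * s * Lc / (1 - X w)"
  proof -
    have h: "(c / (1 - X w)) powr (s - 1) = (c / (1 - X w)) powr s * (1 - X w) / c"
      using c nz by (simp add: powr_diff)
    show ?thesis unfolding F_def c_def[symmetric] h
      using alg1[of "1 - X w" c s "(c / (1 - X w)) powr s" Lc "exp (s * (w + 1) * Lc)"] c nz by simp
  qed
  ultimately show ?thesis by simp
qed


lemma Dc_deriv: "w \<in> U \<Longrightarrow> (Dc j has_field_derivative Dc (Suc j) w) (at w)"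
proof -
  assume w: "w \<in> U"
  have x1: "X w \<noteq> 1" by (rule X_ne1[OF w])
  have xm1: "X w - 1 \<noteq> 0" using x1 by simp
  have Xd: "(X has_field_derivative X w * Lc) (at w)"
    unfolding X_def by (auto intro!: derivative_eq_intros)
  have d1: "(F has_field_derivative F w * s * Lc / (1 - X w)) (at w)" by (rule F_deriv[OF w])
  have yd: "((\<lambda>w. Lc / (X w - 1)) has_field_derivative (- Lc * (X w * Lc) / (X w - 1)^2)) (at w)"
    using xm1 by (auto intro!: derivative_eq_intros Xd simp: power2_eq_square)
  have d2: "((\<lambda>w. (Lc / (X w - 1))^j) has_field_derivative
      of_nat j * (Lc / (X w - 1))^(j - 1) * (- Lc * (X w * Lc) / (X w - 1)^2)) (at w)"
    using DERIV_power[OF yd, of j] by (simp add: mult_ac)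
  have d3: "((\<lambda>w. poly (Ppoly j s) (X w)) has_field_derivative poly (pderiv (Ppoly j s)) (X w) * (X w * Lc)) (at w)"
    by (rule DERIV_chain2[OF poly_DERIV Xd])
  note d4 = DERIV_cmult[OF DERIV_mult[OF DERIV_mult[OF d1 d2] d3], of "(-1)^j * s"]
  have e: "Dc j = (\<lambda>w. (-1)^j * s * (F w * (Lc / (X w - 1))^j * poly (Ppoly j s) (X w)))"
    by (simp add: fun_eq_iff Dc_def mult_ac)
  show ?thesis unfolding e
    using d4 alg2[OF x1, of j s "F w" Lc "poly (Ppoly j s) (X w)" "poly (pderiv (Ppoly j s)) (X w)"]
    by (simp add: Dc_def poly_Ppoly_Suc[OF s_nz] mult_ac)
qed

end

lemma norm_powr_bound: "norm (x powr y) \<le> norm x powr Re y * exp (\<bar>Im y\<bar> * pi)"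
proof -
  have "- Im y * Arg x \<le> \<bar>Im y\<bar> * pi"
  proof -
    have "\<bar>Arg x\<bar> \<le> pi" using mpi_less_Arg[of x] Arg_le_pi[of x] by linarith
    then have "\<bar>Im y\<bar> * \<bar>Arg x\<bar> \<le> \<bar>Im y\<bar> * pi" by (intro mult_left_mono) auto
    moreover have "- Im y * Arg x \<le> \<bar>Im y\<bar> * \<bar>Arg x\<bar>"
      by (metis abs_ge_self abs_minus_cancel abs_mult mult_minus_left)
    ultimately show ?thesis by linarith
  qed
  then show ?thesis unfolding norm_powr_complex
    by (intro mult_left_mono) auto
qed

lemma poly_bound: "\<exists>M. \<forall>x::complex. norm x \<le> 1 \<longrightarrow> norm (poly p x) \<le> M"
proof -
  have "compact (poly p ` cball 0 1)"
    by (intro compact_continuous_image continuous_intros) auto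
  then obtain M where "\<forall>y\<in>poly p ` cball 0 1. norm y \<le> M"
    using compact_imp_bounded bounded_iff by metis
  then show ?thesis by (intro exI[of _ M]) (auto simp: mem_cball_0)
qed

context qzl begin

definition "A = complex_of_real (1 - q) powr s * exp (s * Lc)"
definition "Q = exp (z * Lc)"
definition "an n = pochhammer s n / fact n"
definition "gt n w = A * an n * Q^n * exp ((s + of_nat n) * w * Lc) / ((s + of_nat n) * Lc)"
definition "gd n w = A * an n * Q^n * exp ((s + of_nat n) * w * Lc)"
definition "S = {w. - (Re z / 2) < Re w \<and> \<bar>Im w\<bar> < 1}"
definition "G w = (\<Sum>n. gt n w)"

lemma Lc_nz: "Lc \<noteq> 0" using lnq by (simp add: Lc_def)

lemma sn_nz: "s + of_nat n \<noteq> 0"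
proof -
  have "0 < Re (s + of_nat n)" using s0 by simp
  then show ?thesis by (metis less_irrefl zero_complex.sel(1))
qed

lemma norm_sn: "Re s \<le> norm (s + of_nat n)"
proof -
  have "Re s \<le> Re (s + of_nat n)" by simp
  also have "\<dots> \<le> norm (s + of_nat n)" by (rule complex_Re_le_cmod)
  finally show ?thesis .
qed

lemma S_sub_U: "S \<subseteq> U"
  unfolding S_def U_def using z0 by auto

lemma open_S: "open S"
proof -
  have "S = {w. - (Re z / 2) < Re w} \<inter> ({w. Im w < 1} \<inter> {w. Im w > -1})"
    unfolding S_def by auto
  then show ?thesis
    by (simp add: open_Int open_halfspace_Re_gt open_halfspace_Im_lt open_halfspace_Im_gt)
qed

lemma convex_S: "convex S"
proof -
  have "S = {w. - (Re z / 2) < Re w} \<inter> ({w. Im w < 1} \<inter> {w. Im w > -1})"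
    unfolding S_def by auto
  then show ?thesis
    by (simp add: convex_Int convex_halfspace_Re_gt convex_halfspace_Im_lt convex_halfspace_Im_gt)
qed

lemma real_in_S: "0 \<le> t \<Longrightarrow> complex_of_real t \<in> S"
  unfolding S_def using z0 by auto

lemma real_in_U: "0 \<le> t \<Longrightarrow> complex_of_real t \<in> U"
  using real_in_S S_sub_U by auto

definition "rr = exp (ln q * Re z / 2)"
definition "K1 = norm A * exp (- ln q * Re s * Re z / 2 + \<bar>ln q\<bar> * \<bar>Im s\<bar>)"

lemma rr: "0 \<le> rr" "rr < 1"
  unfolding rr_def using lnq z0 by (auto simp: mult_neg_pos)

lemma norm_Qn: "norm (Q^n) = exp (of_nat n * (Re z * ln q))"
  by (simp add: Q_def Lc_def norm_power exp_of_nat_mult)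

lemma norm_expn: "norm (exp ((s + of_nat n) * w * Lc)) = exp (ln q * ((Re s + of_nat n) * Re w - Im s * Im w))"
  by (simp add: Lc_def algebra_simps)

lemma gd_bound: "w \<in> S \<Longrightarrow> norm (gd n w) \<le> K1 * (norm (an n) * rr^n)"
proof -
  assume w: "w \<in> S"
  then have a: "0 \<le> Re w + Re z / 2" and b: "\<bar>Im w\<bar> \<le> 1" unfolding S_def by auto
  have h1: "ln q * ((Re s + of_nat n) * (Re w + Re z/2)) \<le> 0"
    using lnq s0 a by (intro mult_nonpos_nonneg) auto
  have "\<bar>ln q * Im s * Im w\<bar> \<le> \<bar>ln q\<bar> * \<bar>Im s\<bar>"
    using b by (simp add: abs_mult mult_left_le)
  then have h2: "- (ln q * Im s * Im w) \<le> \<bar>ln q\<bar> * \<bar>Im s\<bar>" by linarith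
  have ineq: "of_nat n * (Re z * ln q) + ln q * ((Re s + of_nat n) * Re w - Im s * Im w)
     \<le> of_nat n * (ln q * Re z / 2) + (- ln q * Re s * Re z / 2 + \<bar>ln q\<bar> * \<bar>Im s\<bar>)"
  proof -
    have id: "(of_nat n * (Re z * ln q) + ln q * ((Re s + of_nat n) * Re w - Im s * Im w))
     - (of_nat n * (ln q * Re z / 2) + (- ln q * Re s * Re z / 2 + \<bar>ln q\<bar> * \<bar>Im s\<bar>))
     = ln q * ((Re s + of_nat n) * (Re w + Re z/2)) + (- (ln q * Im s * Im w) - \<bar>ln q\<bar> * \<bar>Im s\<bar>)"
      by (simp add: algebra_simps)
    show ?thesis using id h1 h2 by linarith
  qed
  have "norm (gd n w) = norm A * norm (an n) * (exp (of_nat n * (Re z * ln q)) * exp (ln q * ((Re s + of_nat n) * Re w - Im s * Im w)))"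
    unfolding gd_def norm_mult norm_Qn[symmetric] norm_expn[symmetric] by simp
  also have "\<dots> = norm A * norm (an n) * exp (of_nat n * (Re z * ln q) + ln q * ((Re s + of_nat n) * Re w - Im s * Im w))"
    by (simp add: exp_add)
  also have "\<dots> \<le> norm A * norm (an n) * exp (of_nat n * (ln q * Re z / 2) + (- ln q * Re s * Re z / 2 + \<bar>ln q\<bar> * \<bar>Im s\<bar>))"
    by (intro mult_left_mono exp_mono ineq) auto
  also have "\<dots> = K1 * (norm (an n) * rr^n)"
    by (simp add: K1_def rr_def exp_add exp_of_nat_mult[symmetric] mult_ac)
  finally show ?thesis .
qed

lemma summable_K1: "summable (\<lambda>n. K1 * (norm (an n) * rr^n))"
  unfolding an_def by (intro summable_mult summable_poch rr)

lemma gd_unif: "uniform_limit S (\<lambda>n w. \<Sum>i<n. gd i w) (\<lambda>w. \<Sum>i. gd i w) sequentially"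
  by (rule Weierstrass_m_test[OF gd_bound summable_K1])

lemma gt_deriv: "(gt n has_field_derivative gd n w) (at w)"
proof -
  have "(gt n has_field_derivative A * an n * Q^n * (exp ((s + of_nat n) * w * Lc) * ((s + of_nat n) * Lc)) / ((s + of_nat n) * Lc)) (at w)"
    unfolding gt_def by (auto intro!: derivative_eq_intros)
  then show ?thesis using sn_nz Lc_nz by (simp add: gd_def mult.assoc)
qed

lemma gt_summable0: "summable (\<lambda>n. gt n 0)"
proof (rule summable_comparison_test'[OF summable_mult[OF summable_poch[OF _ rr(2), of s], of "norm A / (Re s * \<bar>ln q\<bar>)"]])
  show "0 \<le> rr" by (rule rr)
  fix n
  have "norm (gt n 0) = norm A * norm (an n) * norm Q ^ n / (norm (s + of_nat n) * \<bar>ln q\<bar>)"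
    by (simp add: gt_def norm_mult norm_divide norm_power Lc_def)
  also have "\<dots> \<le> norm A * norm (an n) * norm Q ^ n / (Re s * \<bar>ln q\<bar>)"
    using s0 lnq norm_sn sn_nz by (intro divide_left_mono mult_right_mono mult_pos_pos) auto
  also have "\<dots> \<le> norm A * norm (an n) * rr ^ n / (Re s * \<bar>ln q\<bar>)"
  proof -
    have "norm Q \<le> rr" unfolding Q_def rr_def Lc_def using lnq z0 by (simp add: mult_neg_pos)
    then have "norm Q ^ n \<le> rr ^ n" by (intro power_mono) auto
    then show ?thesis using s0 lnq mult_pos_neg[OF s0 lnq] by (intro divide_right_mono mult_left_mono) auto
  qed
  finally show "norm (gt n 0) \<le> norm A / (Re s * \<bar>ln q\<bar>) * (norm (pochhammer s n / fact n) * rr ^ n)"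
    by (simp add: an_def field_simps)
qed

lemma binom_term: "((-s) gchoose n) * (- x)^n = an n * x^n"
proof -
  have "((-s) gchoose n) * (- x)^n = ((-1)^n * (-1)^n) * (an n * x^n)"
    by (simp add: an_def gbinomial_pochhammer power_minus[of x] mult_ac)
  also have "(-1::complex)^n * (-1)^n = 1" by (simp add: power_add[symmetric])
  finally show ?thesis by simp
qed

lemma F_alt: "w \<in> U \<Longrightarrow> F w = A * exp (s * w * Lc) * (1 - X w) powr (-s)"
proof -
  assume w: "w \<in> U"
  have "F w = (of_real (1 - q) powr s * (1 - X w) powr (-s)) * exp (s * (w + 1) * Lc)"
    unfolding F_def using q1 Re_1mX[OF w] by (subst div_powr) auto
  also have "exp (s * (w + 1) * Lc) = exp (s * w * Lc) * exp (s * Lc)"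
    by (simp add: exp_add[symmetric] algebra_simps)
  finally show ?thesis by (simp add: A_def mult_ac)
qed

lemma gd_alt: "gd n w = A * exp (s * w * Lc) * (an n * X w ^ n)"
proof -
  have "exp ((s + of_nat n) * w * Lc) * Q^n = exp (s * w * Lc) * X w ^ n"
    by (simp add: Q_def X_def exp_of_nat_mult[symmetric] exp_add[symmetric] algebra_simps)
  then show ?thesis unfolding gd_def by (simp add: mult_ac)
qed

lemma gd_sums: "w \<in> U \<Longrightarrow> (\<lambda>n. gd n w) sums F w"
proof -
  assume w: "w \<in> U"
  have "(\<lambda>n. ((-s) gchoose n) * (- X w)^n) sums (1 + - X w) powr (-s)"
    by (rule gen_binomial_complex) (use X_lt1[OF w] in simp)
  then have "(\<lambda>n. an n * X w ^ n) sums (1 - X w) powr (-s)"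
    by (simp add: binom_term)
  then have "(\<lambda>n. A * exp (s * w * Lc) * (an n * X w ^ n)) sums (A * exp (s * w * Lc) * (1 - X w) powr (-s))"
    by (rule sums_mult)
  then show ?thesis by (simp add: gd_alt F_alt[OF w])
qed

lemma G_deriv: "w \<in> S \<Longrightarrow> (G has_field_derivative F w) (at w)"
proof -
  assume w: "w \<in> S"
  have uc: "uniformly_convergent_on S (\<lambda>n w. \<Sum>i<n. gd i w)"
    using gd_unif unfolding uniformly_convergent_on_def by blast
  have 0: "0 \<in> S" using real_in_S[of 0] by simp
  have "((\<lambda>w. \<Sum>n. gt n w) has_field_derivative (\<Sum>n. gd n w)) (at w)"
  proof (rule has_field_derivative_series'(2)[of S gt gd 0 w])
    show "convex S" by (rule convex_S)
    show "uniformly_convergent_on S (\<lambda>n w. \<Sum>i<n. gd i w)" by (rule uc)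
    show "0 \<in> S" by (rule 0)
    show "summable (\<lambda>n. gt n 0)" by (rule gt_summable0)
    show "w \<in> interior S" using w open_S by (simp add: interior_open)
    fix n x assume "x \<in> S"
    show "(gt n has_field_derivative gd n x) (at x within S)"
      using gt_deriv by (rule has_field_derivative_at_within)
  qed
  moreover have "(\<Sum>n. gd n w) = F w" using gd_sums[of w] w S_sub_U by (auto simp: sums_iff)
  ultimately show ?thesis unfolding G_def[abs_def] by simp
qed

lemma hyp_term: "A / (s * Lc) * (pochhammer s n * pochhammer s n / (pochhammer (s + 1) n * of_nat (fact n)) * Q ^ n) = gt n 0"
proof -
  have p: "pochhammer s n * (s + of_nat n) = s * pochhammer (s + 1) n"
    using pochhammer_Suc[of s n] pochhammer_rec[of s n] by simp
  have pnz: "pochhammer (s + 1) n \<noteq> 0"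
  proof
    assume "pochhammer (s + 1) n = 0"
    then have "pochhammer s n * (s + of_nat n) = 0" using p by simp
    then have "pochhammer s n = 0" using sn_nz by simp
    then obtain k where "k < n" "s = - of_nat k" by (auto simp: pochhammer_eq_0_iff)
    then show False using s0 by simp
  qed
  have "pochhammer s n / pochhammer (s + 1) n = s / (s + of_nat n)"
    using p pnz sn_nz by (simp add: field_simps)
  then have r: "pochhammer s n * pochhammer s n / (pochhammer (s + 1) n * of_nat (fact n)) = (s / (s + of_nat n)) * an n"
    unfolding an_def by (metis of_nat_fact times_divide_times_eq)
  show ?thesis unfolding r using s_nz Lc_nz sn_nz
    by (simp add: gt_def field_simps)
qed

lemma G0: "G 0 = A / (s * Lc) * hyp2F1 s s (s + 1) Q"
proof -
  have "(\<lambda>n. gt n 0) sums G 0" unfolding G_def using gt_summable0 by (simp add: summable_sums)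
  moreover have e: "(\<lambda>n. gt n 0) = (\<lambda>n. A / (s * Lc) * (pochhammer s n * pochhammer s n / (pochhammer (s + 1) n * of_nat (fact n)) * Q ^ n))"
    by (rule ext) (rule hyp_term[symmetric])
  ultimately have "(\<lambda>n. A / (s * Lc) * (pochhammer s n * pochhammer s n / (pochhammer (s + 1) n * of_nat (fact n)) * Q ^ n)) sums G 0"
    by (simp only: e)
  then have "(\<lambda>n. A / (s * Lc) * (pochhammer s n * pochhammer s n / (pochhammer (s + 1) n * of_nat (fact n)) * Q ^ n) / (A / (s * Lc))) sums (G 0 / (A / (s * Lc)))"
    by (rule sums_divide)
  moreover have Anz: "A / (s * Lc) \<noteq> 0" using q1 s_nz Lc_nz by (simp add: A_def powr_def)
  ultimately have "(\<lambda>n. pochhammer s n * pochhammer s n / (pochhammer (s + 1) n * of_nat (fact n)) * Q ^ n) sums (G 0 / (A / (s * Lc)))"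
    by (simp add: mult_ac)
  then have "hyp2F1 s s (s + 1) Q = G 0 / (A / (s * Lc))" unfolding hyp2F1_def by (simp add: sums_iff)
  then show ?thesis using Anz by simp
qed

definition "rho = exp (Re z * ln q)"

lemma rho: "0 < rho" "rho < 1"
  unfolding rho_def using z0 lnq by (auto simp: mult_pos_neg)

lemma normX_t: "0 \<le> t \<Longrightarrow> norm (X (of_real t)) \<le> rho"
  unfolding norm_X rho_def using lnq by (simp add: mult_nonneg_nonpos algebra_simps)

lemma norm_1mX: "0 \<le> t \<Longrightarrow> 1 - rho \<le> norm (1 - X (of_real t))"
proof -
  assume t: "0 \<le> t"
  have "norm (1::complex) \<le> norm (1 - X (of_real t)) + norm (X (of_real t))"
    by (metis diff_add_cancel norm_triangle_ineq)
  then show ?thesis using normX_t[OF t] by simp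
qed

lemma norm_Xm1: "0 \<le> t \<Longrightarrow> 1 - rho \<le> norm (X (of_real t) - 1)"
  using norm_1mX by (simp add: norm_minus_commute)

definition "KF = ((1 - q) / (1 - rho)) powr Re s * exp (\<bar>Im s\<bar> * pi) * exp (Re s * ln q)"

lemma F_bound: "0 \<le> t \<Longrightarrow> norm (F (of_real t)) \<le> KF * exp (Re s * t * ln q)"
proof -
  assume t: "0 \<le> t"
  have n1: "norm (complex_of_real (1 - q) / (1 - X (of_real t))) \<le> (1 - q) / (1 - rho)"
  proof -
    have "norm (complex_of_real (1 - q) / (1 - X (of_real t))) = (1 - q) / norm (1 - X (of_real t))"
      unfolding norm_divide norm_of_real using q1 by simp
    also have "\<dots> \<le> (1 - q) / (1 - rho)"
      using q1 rho norm_1mX[OF t] by (intro divide_left_mono mult_pos_pos) auto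
    finally show ?thesis .
  qed
  have "norm (F (of_real t)) = norm ((complex_of_real (1 - q) / (1 - X (of_real t))) powr s) * exp (Re s * (t + 1) * ln q)"
    by (simp add: F_def norm_mult Lc_def)
  also have "\<dots> \<le> (((1 - q) / (1 - rho)) powr Re s * exp (\<bar>Im s\<bar> * pi)) * exp (Re s * (t + 1) * ln q)"
  proof (rule mult_right_mono)
    have "norm (complex_of_real (1 - q) / (1 - X (of_real t))) powr Re s \<le> ((1 - q) / (1 - rho)) powr Re s"
      by (rule powr_mono2) (use n1 s0 in auto)
    then have "norm (complex_of_real (1 - q) / (1 - X (of_real t))) powr Re s * exp (\<bar>Im s\<bar> * pi)
      \<le> ((1 - q) / (1 - rho)) powr Re s * exp (\<bar>Im s\<bar> * pi)" by (rule mult_right_mono) simp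
    with norm_powr_bound show "norm ((complex_of_real (1 - q) / (1 - X (of_real t))) powr s)
      \<le> ((1 - q) / (1 - rho)) powr Re s * exp (\<bar>Im s\<bar> * pi)" by (rule order.trans)
  qed simp
  also have "\<dots> = KF * exp (Re s * t * ln q)"
    by (simp add: KF_def exp_add[symmetric] algebra_simps)
  finally show ?thesis .
qed

lemma Dc_bound: "\<exists>K. \<forall>t\<ge>0. norm (Dc j (of_real t)) \<le> K * exp (Re s * t * ln q)"
proof -
  obtain M where M: "\<And>x. norm x \<le> 1 \<Longrightarrow> norm (poly (Ppoly j s) x) \<le> M"
    using poly_bound by blast
  have "norm (poly (Ppoly j s) 0) \<le> M" using M[of 0] by simp
  then have M0: "0 \<le> M" using norm_ge_zero[of "poly (Ppoly j s) 0"] by linarith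
  have KF0: "0 \<le> KF" unfolding KF_def by simp
  show ?thesis
  proof (intro exI allI impI)
    fix t :: real assume t: "0 \<le> t"
    have nX: "norm (X (of_real t)) \<le> 1" using normX_t[OF t] rho by simp
    have y: "norm (Lc / (X (of_real t) - 1)) \<le> \<bar>ln q\<bar> / (1 - rho)"
      unfolding norm_divide Lc_def norm_of_real using rho norm_Xm1[OF t] by (intro divide_left_mono mult_pos_pos) auto
    have "norm (Dc j (of_real t)) = norm s * norm (F (of_real t)) * norm (Lc / (X (of_real t) - 1)) ^ j * norm (poly (Ppoly j s) (X (of_real t)))"
      by (simp add: Dc_def norm_mult norm_power)
    also have "\<dots> \<le> norm s * (KF * exp (Re s * t * ln q)) * (\<bar>ln q\<bar> / (1 - rho)) ^ j * M"
      by (intro mult_mono F_bound[OF t] power_mono y M[OF nX] mult_nonneg_nonneg) (use KF0 M0 rho in auto)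
    also have "\<dots> = (norm s * KF * (\<bar>ln q\<bar> / (1 - rho)) ^ j * M) * exp (Re s * t * ln q)"
      by (simp add: mult_ac)
    finally show "norm (Dc j (of_real t)) \<le> (norm s * KF * (\<bar>ln q\<bar> / (1 - rho)) ^ j * M) * exp (Re s * t * ln q)" .
  qed
qed

lemma G_bound: "0 \<le> t \<Longrightarrow> norm (G (of_real t)) \<le> (\<Sum>n. norm A / (Re s * \<bar>ln q\<bar>) * (norm (an n) * rr^n)) * exp (Re s * t * ln q)"
proof -
  assume t: "0 \<le> t"
  have sm: "summable (\<lambda>n. norm A / (Re s * \<bar>ln q\<bar>) * (norm (an n) * rr^n))"
    unfolding an_def by (intro summable_mult summable_poch rr)
  have "norm (G (of_real t)) \<le> (\<Sum>n. norm A / (Re s * \<bar>ln q\<bar>) * (norm (an n) * rr^n) * exp (Re s * t * ln q))"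
    unfolding G_def
  proof (rule norm_suminf_le)
    show "summable (\<lambda>n. norm A / (Re s * \<bar>ln q\<bar>) * (norm (an n) * rr^n) * exp (Re s * t * ln q))"
      by (intro summable_mult2 sm)
    fix n
    have "norm (gt n (of_real t)) = norm A * norm (an n) * norm Q ^ n * exp (ln q * ((Re s + of_nat n) * t)) / (norm (s + of_nat n) * \<bar>ln q\<bar>)"
      using norm_expn[of n "of_real t"] by (simp add: gt_def norm_mult norm_divide norm_power Lc_def)
    also have "\<dots> \<le> norm A * norm (an n) * rr ^ n * exp (Re s * t * ln q) / (Re s * \<bar>ln q\<bar>)"
    proof -
      have "norm Q \<le> rr" unfolding Q_def rr_def Lc_def using lnq z0 by (simp add: mult_neg_pos)
      then have a: "norm Q ^ n \<le> rr ^ n" by (intro power_mono) auto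
      have b: "exp (ln q * ((Re s + of_nat n) * t)) \<le> exp (Re s * t * ln q)"
        using lnq t by (simp add: algebra_simps mult_nonneg_nonpos)
      have c: "Re s * \<bar>ln q\<bar> \<le> norm (s + of_nat n) * \<bar>ln q\<bar>" using norm_sn by (intro mult_right_mono) auto
      have d: "0 < Re s * \<bar>ln q\<bar>" using mult_pos_neg[OF s0 lnq] lnq by simp
      have num: "norm A * norm (an n) * norm Q ^ n * exp (ln q * ((Re s + of_nat n) * t)) \<le> norm A * norm (an n) * rr ^ n * exp (Re s * t * ln q)"
        using rr(1) by (intro mult_mono a b mult_left_mono) auto
      show ?thesis
        by (rule frac_le[OF _ num d c]) (use rr(1) in auto)
    qed
    finally show "norm (gt n (of_real t)) \<le> norm A / (Re s * \<bar>ln q\<bar>) * (norm (an n) * rr^n) * exp (Re s * t * ln q)"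
      by (simp add: field_simps)
  qed
  also have "\<dots> = (\<Sum>n. norm A / (Re s * \<bar>ln q\<bar>) * (norm (an n) * rr^n)) * exp (Re s * t * ln q)"
    by (rule suminf_mult2[symmetric, OF sm])
  finally show ?thesis .
qed

end

lemma telesc: "(\<Sum>j=1..p. (-1)^(j-1) * (c j + c (j-1))) = c 0 - (-1)^p * (c p :: complex)"
proof (induction p)
  case 0 then show ?case by simp
next
  case (Suc p)
  have "(\<Sum>j=1..Suc p. (-1)^(j-1) * (c j + c (j-1))) = (\<Sum>j=1..p. (-1)^(j-1) * (c j + c (j-1))) + (-1)^p * (c (Suc p) + c p)"
    by simp
  also have "\<dots> = c 0 - (-1)^(Suc p) * c (Suc p)" unfolding Suc.IH by (simp add: algebra_simps)
  finally show ?case .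
qed

context qzl begin

definition "Dr j t = Dc j (complex_of_real t)"
definition "Gr t = G (complex_of_real t)"
definition "Bc j k t = complex_of_real (bernpoly j (t - real k) / fact j)"
definition "Phi p k t = (\<Sum>j=1..p. (-1)^(j-1) * Bc j k t * Dr (j-1) t)"

lemma Dc0: "Dc 0 w = F w" using s_nz by (simp add: Dc_def)

lemma Dr_vd: "0 \<le> t \<Longrightarrow> (Dr j has_vector_derivative Dr (Suc j) t) (at t within T)"
  unfolding Dr_def[abs_def] by (rule has_vector_derivative_real_field[OF Dc_deriv[OF real_in_U]])

lemma Gr_vd: "0 \<le> t \<Longrightarrow> (Gr has_vector_derivative Dr 0 t) (at t within T)"
  unfolding Gr_def[abs_def] Dr_def Dc0 by (rule has_vector_derivative_real_field[OF G_deriv[OF real_in_S]])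

lemma Bc_vd: "(Bc (Suc i) k has_vector_derivative Bc i k t) (at t within T)"
proof -
  have h1: "((\<lambda>t. t - real k) has_real_derivative 1) (at t)"
    using DERIV_diff[OF DERIV_ident DERIV_const[of "real k" "at t"]] by simp
  have h2: "((\<lambda>t. bernpoly (Suc i) (t - real k)) has_real_derivative (of_nat (Suc i) * bernpoly i (t - real k)) * 1) (at t)"
    by (rule DERIV_chain2[OF bernpoly_deriv h1])
  have h3: "((\<lambda>t. bernpoly (Suc i) (t - real k) / fact (Suc i)) has_real_derivative (of_nat (Suc i) * bernpoly i (t - real k)) * 1 / fact (Suc i)) (at t within T)"
    by (rule has_field_derivative_at_within[OF DERIV_cdivide[OF h2]])
  have f: "(fact (Suc i) :: real) = of_nat (Suc i) * fact i" by (rule fact_Suc)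
  have c: "(of_nat (Suc i) :: real) \<noteq> 0" by (simp only: of_nat_eq_0_iff)
  have "(of_nat (Suc i) * bernpoly i (t - real k)) * 1 / fact (Suc i) = bernpoly i (t - real k) / fact i"
    unfolding f mult_1_right by (rule nonzero_mult_divide_mult_cancel_left[OF c])
  then have "((\<lambda>t. bernpoly (Suc i) (t - real k) / fact (Suc i)) has_real_derivative bernpoly i (t - real k) / fact i) (at t within T)"
    using h3 by simp
  then show ?thesis unfolding Bc_def[abs_def] by (rule has_vector_derivative_of_real)
qed

lemma term_vd: "1 \<le> j \<Longrightarrow> 0 \<le> t \<Longrightarrow>
  ((\<lambda>t. (-1)^(j-1) * Bc j k t * Dr (j-1) t) has_vector_derivative
     (-1)^(j-1) * (Bc j k t * Dr j t + Bc (j-1) k t * Dr (j-1) t)) (at t within T)"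
proof -
  assume j: "1 \<le> j" and t: "0 \<le> t"
  then obtain i where i: "j = Suc i" by (cases j) auto
  have "((\<lambda>t. (-1)^i * Bc (Suc i) k t * Dr i t) has_vector_derivative
     ((-1)^i * Bc (Suc i) k t) * Dr (Suc i) t + ((-1)^i * Bc i k t + 0 * Bc (Suc i) k t) * Dr i t) (at t within T)"
    by (intro has_vector_derivative_mult has_vector_derivative_const Bc_vd Dr_vd t)
  then show ?thesis unfolding i by (simp add: algebra_simps)
qed

lemma Phi_vd: "0 \<le> t \<Longrightarrow>
  (Phi p k has_vector_derivative (Dr 0 t - (-1)^p * (Bc p k t * Dr p t))) (at t within T)"
proof -
  assume t: "0 \<le> t"
  have d: "(Phi p k has_vector_derivative (\<Sum>j=1..p. (-1)^(j-1) * (Bc j k t * Dr j t + Bc (j-1) k t * Dr (j-1) t))) (at t within T)"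
    unfolding Phi_def[abs_def]
  proof (rule has_vector_derivative_sum)
    fix j assume "j \<in> {1..p}"
    then have "1 \<le> j" by simp
    then show "((\<lambda>t. (-1)^(j-1) * Bc j k t * Dr (j-1) t) has_vector_derivative
     (-1)^(j-1) * (Bc j k t * Dr j t + Bc (j-1) k t * Dr (j-1) t)) (at t within T)"
      using t by (rule term_vd)
  qed
  have e: "(\<Sum>j=1..p. (-1)^(j-1) * (Bc j k t * Dr j t + Bc (j-1) k t * Dr (j-1) t))
     = Bc 0 k t * Dr 0 t - (-1)^p * (Bc p k t * Dr p t)"
    by (rule telesc)
  have b: "Bc 0 k t = 1" by (simp add: Bc_def bernpoly_0)
  show ?thesis using d unfolding e b by simp
qed

definition "Tt p t = (\<Sum>j=2..p. (-1)^(j-1) * complex_of_real (bernnum j / fact j) * Dr (j-1) t)"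
definition "ct p t = complex_of_real (pbernpoly p t / fact p) * Dr p t"

lemma pbern_interval: "p \<noteq> 1 \<Longrightarrow> real k \<le> t \<Longrightarrow> t \<le> real k + 1 \<Longrightarrow> pbernpoly p t = bernpoly p (t - real k)"
proof -
  assume p: "p \<noteq> 1" and t1: "real k \<le> t" and t2: "t \<le> real k + 1"
  show ?thesis
  proof (cases "t < real k + 1")
    case True
    then have "\<lfloor>t\<rfloor> = int k" using t1 by (simp add: floor_eq_iff)
    then show ?thesis by (simp add: pbernpoly_def)
  next
    case False
    then have tk: "t = real k + 1" using t2 by simp
    then have "\<lfloor>t\<rfloor> = int k + 1" by simp
    then have "pbernpoly p t = bernpoly p 0" using tk by (simp add: pbernpoly_def)
    also have "\<dots> = bernpoly p 1" using bernpoly_1_0[OF p] by simp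
    finally show ?thesis using tk by simp
  qed
qed

lemma bernpoly_Suc0: "bernpoly (Suc 0) t = t - 1/2" using bernpoly_1 by simp

lemma Phi_split: "1 \<le> p \<Longrightarrow> Phi p k t = Bc 1 k t * Dr 0 t + (\<Sum>j=2..p. (-1)^(j-1) * Bc j k t * Dr (j-1) t)"
  unfolding Phi_def by (subst sum.atLeast_Suc_atMost) (auto simp: numeral_2_eq_2)

lemma Phi_end: "1 \<le> p \<Longrightarrow> Phi p k (real k + 1) = Dr 0 (real k + 1) / 2 + Tt p (real k + 1)"
proof -
  assume p: "1 \<le> p"
  have "(\<Sum>j=2..p. (-1)^(j-1) * Bc j k (real k + 1) * Dr (j-1) (real k + 1)) = Tt p (real k + 1)"
    unfolding Tt_def
  proof (rule sum.cong)
    fix j assume "j \<in> {2..p}"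
    then have "j \<noteq> 1" by auto
    then show "(-1)^(j-1) * Bc j k (real k + 1) * Dr (j-1) (real k + 1) = (-1)^(j-1) * complex_of_real (bernnum j / fact j) * Dr (j-1) (real k + 1)"
      by (simp add: Bc_def bernnum_def bernpoly_1_0)
  qed simp
  moreover have "Bc 1 k (real k + 1) = 1/2" by (simp add: Bc_def bernpoly_Suc0)
  ultimately show ?thesis using Phi_split[OF p] by simp
qed

lemma Phi_start: "1 \<le> p \<Longrightarrow> Phi p k (real k) = - Dr 0 (real k) / 2 + Tt p (real k)"
proof -
  assume p: "1 \<le> p"
  have "(\<Sum>j=2..p. (-1)^(j-1) * Bc j k (real k) * Dr (j-1) (real k)) = Tt p (real k)"
    unfolding Tt_def
  proof (rule sum.cong)
    fix j assume "j \<in> {2..p}"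
    then show "(-1)^(j-1) * Bc j k (real k) * Dr (j-1) (real k) = (-1)^(j-1) * complex_of_real (bernnum j / fact j) * Dr (j-1) (real k)"
      by (simp add: Bc_def bernnum_def)
  qed simp
  moreover have "Bc 1 k (real k) = - 1/2" by (simp add: Bc_def bernpoly_Suc0)
  ultimately show ?thesis using Phi_split[OF p] by simp
qed

lemma interval_int: "2 \<le> p \<Longrightarrow> even p \<Longrightarrow>
  (ct p has_integral ((Gr (real k + 1) - Gr (real k)) - (Dr 0 (real k + 1) + Dr 0 (real k)) / 2
       - (Tt p (real k + 1) - Tt p (real k)))) {real k..real k + 1}"
proof -
  assume p: "2 \<le> p" "even p"
  define H where "H t = Gr t - Phi p k t" for t
  have "((\<lambda>t. Bc p k t * Dr p t) has_integral (H (real k + 1) - H (real k))) {real k..real k + 1}"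
  proof (rule fundamental_theorem_of_calculus)
    fix x assume x: "x \<in> {real k..real k + 1}"
    then have x0: "0 \<le> x" by simp
    have "(H has_vector_derivative (Dr 0 x - (Dr 0 x - (-1)^p * (Bc p k x * Dr p x)))) (at x within {real k..real k + 1})"
      unfolding H_def[abs_def] by (intro has_vector_derivative_diff Gr_vd Phi_vd x0)
    then show "(H has_vector_derivative (Bc p k x * Dr p x)) (at x within {real k..real k + 1})"
      using p by simp
  qed simp
  moreover have "H (real k + 1) - H (real k) = (Gr (real k + 1) - Gr (real k)) - (Dr 0 (real k + 1) + Dr 0 (real k)) / 2
       - (Tt p (real k + 1) - Tt p (real k))"
  proof -
    have p1: "1 \<le> p" using p by simp
    show ?thesis unfolding H_def Phi_end[OF p1] Phi_start[OF p1] by (simp add: field_simps)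
  qed
  ultimately have "((\<lambda>t. Bc p k t * Dr p t) has_integral ((Gr (real k + 1) - Gr (real k)) - (Dr 0 (real k + 1) + Dr 0 (real k)) / 2
       - (Tt p (real k + 1) - Tt p (real k)))) {real k..real k + 1}" by simp
  then show ?thesis
  proof (rule has_integral_eq[rotated])
    fix x assume "x \<in> {real k..real k + 1}"
    then have "pbernpoly p x = bernpoly p (x - real k)" using p by (intro pbern_interval) auto
    then show "Bc p k x * Dr p x = ct p x"
      by (simp add: ct_def Bc_def)
  qed
qed

lemma sum_int: "2 \<le> p \<Longrightarrow> even p \<Longrightarrow>
  (ct p has_integral (Gr (real N) - Gr 0 - (\<Sum>k<N. (Dr 0 (real k + 1) + Dr 0 (real k)) / 2)
     - (Tt p (real N) - Tt p 0))) {0..real N}"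
proof (induction N)
  case 0
  then show ?case using has_integral_refl(2)[of "ct p" 0] by simp
next
  case (Suc N)
  have "(ct p has_integral ((Gr (real N) - Gr 0 - (\<Sum>k<N. (Dr 0 (real k + 1) + Dr 0 (real k)) / 2)
     - (Tt p (real N) - Tt p 0)) + ((Gr (real N + 1) - Gr (real N)) - (Dr 0 (real N + 1) + Dr 0 (real N)) / 2
       - (Tt p (real N + 1) - Tt p (real N))))) {0..real N + 1}"
    by (rule has_integral_combine[OF _ _ Suc.IH[OF Suc.prems] interval_int[OF Suc.prems]]) auto
  then show ?case by (simp add: algebra_simps)
qed

lemma half_sum: "(\<Sum>k<N. (Dr 0 (real k + 1) + Dr 0 (real k)) / 2) = (\<Sum>k<N. Dr 0 (real k)) + (Dr 0 (real N) - Dr 0 0) / 2"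
proof (induction N)
  case (Suc N)
  have "(\<Sum>k<Suc N. (Dr 0 (real k + 1) + Dr 0 (real k)) / 2) = (\<Sum>k<N. (Dr 0 (real k + 1) + Dr 0 (real k)) / 2) + (Dr 0 (real N + 1) + Dr 0 (real N)) / 2"
    by simp
  also have "\<dots> = (\<Sum>k<N. Dr 0 (real k)) + (Dr 0 (real N) - Dr 0 0) / 2 + (Dr 0 (real N + 1) + Dr 0 (real N)) / 2"
    unfolding Suc.IH ..
  also have "\<dots> = (\<Sum>k<Suc N. Dr 0 (real k)) + (Dr 0 (real (Suc N)) - Dr 0 0) / 2"
    by (simp add: field_simps)
  finally show ?case .
qed simp

lemma EM_finite: "2 \<le> p \<Longrightarrow> even p \<Longrightarrow>
  (\<Sum>k<N. Dr 0 (real k)) = Gr (real N) - Gr 0 - (Dr 0 (real N) - Dr 0 0) / 2 - (Tt p (real N) - Tt p 0)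
     - integral {0..real N} (ct p)"
proof -
  assume p: "2 \<le> p" "even p"
  have "integral {0..real N} (ct p) = Gr (real N) - Gr 0 - (\<Sum>k<N. (Dr 0 (real k + 1) + Dr 0 (real k)) / 2)
     - (Tt p (real N) - Tt p 0)"
    by (rule integral_unique[OF sum_int[OF p]])
  then show ?thesis unfolding half_sum by (simp add: algebra_simps)
qed

end

lemma bernpoly_cont: "continuous_on A (bernpoly n)"
proof -
  have "bernpoly n = (\<lambda>t. \<Sum>i\<le>n. fact n * bg i * t ^ (n - i) / fact (n - i))"
    by (rule ext) (rule bernpoly_sum)
  then show ?thesis by (simp add: continuous_intros)
qed

lemma pbernpoly_bound: "\<exists>B. \<forall>t. \<bar>pbernpoly n t\<bar> \<le> B"
proof -
  have "compact (bernpoly n ` {0..1})"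
    by (intro compact_continuous_image bernpoly_cont) auto
  then obtain B where B: "\<forall>y\<in>bernpoly n ` {0..1}. norm y \<le> B"
    using compact_imp_bounded bounded_iff by metis
  show ?thesis
  proof (intro exI allI)
    fix t :: real
    have f1: "of_int \<lfloor>t\<rfloor> \<le> t" "t < of_int \<lfloor>t\<rfloor> + 1" using floor_correct[of t] by auto
    have "0 \<le> t - of_int \<lfloor>t\<rfloor>" "t - of_int \<lfloor>t\<rfloor> \<le> 1" using f1 by linarith+
    then have "t - of_int \<lfloor>t\<rfloor> \<in> {0..1}" by simp
    then show "\<bar>pbernpoly n t\<bar> \<le> B" using B by (auto simp: pbernpoly_def)
  qed
qed

context qzl begin

lemma exp_lim: "(\<lambda>N. exp (Re s * real N * ln q)) \<longlonglongrightarrow> 0"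
proof -
  have e: "(\<lambda>N. exp (Re s * real N * ln q)) = (\<lambda>N. exp (Re s * ln q) ^ N)"
    by (rule ext) (simp add: exp_of_nat_mult[symmetric] mult_ac)
  have "norm (exp (Re s * ln q)) < 1" using mult_pos_neg[OF s0 lnq] by simp
  then show ?thesis unfolding e by (rule LIMSEQ_power_zero)
qed

lemma bound_lim:
  assumes "\<And>t. 0 \<le> t \<Longrightarrow> norm (f t :: complex) \<le> K * exp (Re s * t * ln q)"
  shows "(\<lambda>N. f (real N)) \<longlonglongrightarrow> 0"
proof (rule Lim_null_comparison)
  show "\<forall>\<^sub>F N in sequentially. norm (f (real N)) \<le> K * exp (Re s * real N * ln q)"
    using assms by simp
  show "(\<lambda>N. K * exp (Re s * real N * ln q)) \<longlonglongrightarrow> 0"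
    using tendsto_mult_right_zero[OF exp_lim] by simp
qed

lemma Dr_lim: "(\<lambda>N. Dr j (real N)) \<longlonglongrightarrow> 0"
proof -
  obtain K where "\<forall>t\<ge>0. norm (Dc j (of_real t)) \<le> K * exp (Re s * t * ln q)"
    using Dc_bound by blast
  then show ?thesis by (intro bound_lim[of _ K]) (auto simp: Dr_def)
qed

lemma Gr_lim: "(\<lambda>N. Gr (real N)) \<longlonglongrightarrow> 0"
  unfolding Gr_def by (rule bound_lim[OF G_bound])

lemma Tt_lim: "(\<lambda>N. Tt p (real N)) \<longlonglongrightarrow> 0"
  unfolding Tt_def by (intro tendsto_null_sum tendsto_mult_right_zero Dr_lim)

lemma ct_bound: "\<exists>K. \<forall>t\<ge>0. norm (ct p t) \<le> K * exp (Re s * t * ln q)"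
proof -
  obtain K where K: "\<forall>t\<ge>0. norm (Dc p (of_real t)) \<le> K * exp (Re s * t * ln q)"
    using Dc_bound by blast
  obtain B where B: "\<And>t. \<bar>pbernpoly p t\<bar> \<le> B" using pbernpoly_bound by blast
  have B0: "0 \<le> B" using B[of 0] by linarith
  show ?thesis
  proof (intro exI allI impI)
    fix t :: real assume t: "0 \<le> t"
    have "norm (ct p t) = \<bar>pbernpoly p t\<bar> / fact p * norm (Dc p (of_real t))"
      by (simp add: ct_def Dr_def norm_mult norm_divide)
    also have "\<dots> \<le> B / fact p * (K * exp (Re s * t * ln q))"
      using B K t B0 by (intro mult_mono divide_right_mono) auto
    finally show "norm (ct p t) \<le> (B / fact p * K) * exp (Re s * t * ln q)" by simp
  qed
qed

lemma int_lim: "2 \<le> p \<Longrightarrow> even p \<Longrightarrow>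
  ct p integrable_on {0..} \<and> (\<lambda>N. integral {0..real N} (ct p)) \<longlonglongrightarrow> integral {0..} (ct p)"
proof -
  assume p: "2 \<le> p" "even p"
  obtain K where K: "\<And>t. 0 \<le> t \<Longrightarrow> norm (ct p t) \<le> K * exp (Re s * t * ln q)"
    using ct_bound by blast
  define a where "a = - (Re s * ln q)"
  have a: "0 < a" unfolding a_def using mult_pos_neg[OF s0 lnq] by simp
  define h where "h t = K * exp (- a * t)" for t
  have h: "h integrable_on {0..}"
    unfolding h_def using integrable_on_cmult_left[OF integrable_on_exp_minus_to_infinity[OF a, of 0], of K]
    by simp
  define fN where "fN N t = (if t \<in> {0..real N} then ct p t else 0)" for N t
  have int_eq: "(fN N has_integral integral {0..real N} (ct p)) {0..}" for N
  proof -
    have "(ct p has_integral integral {0..real N} (ct p)) {0..real N}"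
      using sum_int[OF p, of N] by (auto intro: integral_unique[symmetric] simp: has_integral_integrable_integral)
    then show ?thesis unfolding fN_def[abs_def] by (subst has_integral_restrict) auto
  qed
  have i1: "fN N integrable_on {0..}" for N using int_eq by blast
  have i2: "norm (fN N x) \<le> h x" if x: "x \<in> {0..}" for N x
  proof -
    have "0 \<le> K * exp (Re s * x * ln q)" using order_trans[OF norm_ge_zero K[of x]] x by simp
    then show "norm (fN N x) \<le> h x"
      using K[of x] x unfolding fN_def h_def a_def by (auto simp: algebra_simps)
  qed
  have i3: "(\<lambda>N. fN N x) \<longlonglongrightarrow> ct p x" if x: "x \<in> {0..}" for x
  proof -
    have "\<forall>\<^sub>F N in sequentially. fN N x = ct p x"
    proof (rule eventually_sequentiallyI[of "nat \<lceil>x\<rceil>"])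
      fix N assume "nat \<lceil>x\<rceil> \<le> N"
      then have "x \<le> real N" by linarith
      then show "fN N x = ct p x" using x by (simp add: fN_def)
    qed
    then show "(\<lambda>N. fN N x) \<longlonglongrightarrow> ct p x" by (rule tendsto_eventually)
  qed
  note dc = dominated_convergence[of fN "{0..}" h "ct p", OF i1 h i2 i3]
  moreover have "integral {0..} (fN N) = integral {0..real N} (ct p)" for N
    using int_eq by (rule integral_unique)
  ultimately show ?thesis by simp
qed

lemma EM_limit: "2 \<le> p \<Longrightarrow> even p \<Longrightarrow>
  (\<lambda>k. Dr 0 (real k)) sums (- Gr 0 + Dr 0 0 / 2 + Tt p 0 - integral {0..} (ct p))"
proof -
  assume p: "2 \<le> p" "even p"
  have "(\<lambda>N. Gr (real N) - Gr 0 - (Dr 0 (real N) - Dr 0 0) / 2 - (Tt p (real N) - Tt p 0)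
     - integral {0..real N} (ct p)) \<longlonglongrightarrow> 0 - Gr 0 - (0 - Dr 0 0) / 2 - (0 - Tt p 0) - integral {0..} (ct p)"
    using int_lim[OF p] by (intro tendsto_intros Gr_lim Dr_lim Tt_lim) auto
  then show ?thesis unfolding sums_def EM_finite[OF p] by (simp add: algebra_simps)
qed

end

lemma even_reindex:
  fixes g :: "nat \<Rightarrow> complex" and m :: nat
  assumes "\<And>k. 1 \<le> k \<Longrightarrow> g (2 * k + 1) = (0::complex)"
  shows "(\<Sum>j=2..2*m. g j) = (\<Sum>k=1..m. g (2 * k))"
proof (induction m)
  case 0 then show ?case by simp
next
  case (Suc m)
  show ?case
  proof (cases m)
    case 0 then show ?thesis by simp
  next
    case (Suc m')
    have "(\<Sum>j=2..2 * Suc m. g j) = (\<Sum>j=2..Suc (Suc (2 * m)). g j)" by simp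
    also have "\<dots> = (\<Sum>j=2..2*m. g j) + g (2 * m + 1) + g (2 * m + 2)"
      using Suc by (simp add: sum.cl_ivl_Suc)
    also have "g (2 * m + 1) = 0" using assms[of m] Suc by simp
    also have "(\<Sum>j=2..2*m. g j) + 0 + g (2 * m + 2) = (\<Sum>k=1..Suc m. g (2 * k))"
      using Suc.IH by simp
    finally show ?thesis .
  qed
qed

context qzl begin

lemma X_real: "X (complex_of_real t) = complex_of_real q powr (complex_of_real t + z)"
  by (simp add: X_def cpow_real[OF q0] Lc_def)

lemma Q_eq: "Q = complex_of_real q powr z"
  by (simp add: Q_def cpow_real[OF q0] Lc_def)

lemma X0: "X 0 = complex_of_real q powr z"
  by (simp add: X_def cpow_real[OF q0] Lc_def)

lemma qs: "complex_of_real q powr s = exp (s * Lc)"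
  by (simp add: cpow_real[OF q0] Lc_def)

lemma A_eq: "A = complex_of_real (q - q^2) powr s"
proof -
  have "complex_of_real (q - q^2) = complex_of_real q * complex_of_real (1 - q)"
    by (simp add: power2_eq_square algebra_simps)
  then have "complex_of_real (q - q^2) powr s = complex_of_real q powr s * complex_of_real (1 - q) powr s"
    using q0 by (simp add: powr_times_real_left)
  then show ?thesis by (simp add: A_def qs mult_ac)
qed

lemma F0: "F 0 = ((complex_of_real (q - q^2)) / (1 - complex_of_real q powr z)) powr s"
proof -
  have e: "(complex_of_real (q - q^2)) / (1 - complex_of_real q powr z) = complex_of_real q * (complex_of_real (1 - q) / (1 - X 0))"
    by (simp add: X0 power2_eq_square algebra_simps)
  have "(complex_of_real q * (complex_of_real (1 - q) / (1 - X 0))) powr s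
     = complex_of_real q powr s * (complex_of_real (1 - q) / (1 - X 0)) powr s"
    by (rule powr_times_real_left) (use q0 in auto)
  then show ?thesis unfolding e by (simp add: F_def qs mult_ac)
qed

lemma term_eq: "complex_of_real q powr (s * of_nat (k + 1)) / (qnum q (of_nat k + z)) powr s = Dr 0 (real k)"
proof -
  have Xk: "complex_of_real q powr (of_nat k + z) = X (complex_of_real (real k))"
    using X_real[of "real k"] by simp
  have U: "complex_of_real (real k) \<in> U" by (rule real_in_U) simp
  have "qnum q (of_nat k + z) = (1 - X (complex_of_real (real k))) / complex_of_real (1 - q)"
    unfolding qnum_def Xk by simp
  then have "1 / (qnum q (of_nat k + z)) powr s = (complex_of_real (1 - q) / (1 - X (complex_of_real (real k)))) powr s"
    using div_powr_inv[of "1 - q" "1 - X (complex_of_real (real k))" s] q1 Re_1mX[OF U] by simp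
  moreover have "complex_of_real q powr (s * of_nat (k + 1)) = exp (s * (complex_of_real (real k) + 1) * Lc)"
    by (simp add: cpow_real[OF q0] Lc_def add.commute)
  ultimately show ?thesis
    by (simp add: Dr_def Dc0 F_def divide_inverse mult_ac)
qed

lemma qzeta_eq: "2 \<le> p \<Longrightarrow> even p \<Longrightarrow> qzeta s z q = - Gr 0 + Dr 0 0 / 2 + Tt p 0 - integral {0..} (ct p)"
proof -
  assume p: "2 \<le> p" "even p"
  have "qzeta s z q = (\<Sum>k. Dr 0 (real k))" unfolding qzeta_def term_eq ..
  then show ?thesis using EM_limit[OF p] by (simp add: sums_iff)
qed

lemma Dr_odd0: "Dr (2 * k - 1) 0 = - (s * F 0 * (Lc / (X 0 - 1)) ^ (2 * k - 1) * poly (Ppoly (2 * k - 1) s) (X 0))" if "1 \<le> k"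
proof -
  have "odd (2 * k - 1)" using that by simp
  then have "(-1::complex) ^ (2 * k - 1) = -1" by simp
  then show ?thesis by (simp add: Dr_def Dc_def)
qed

lemma Tt0: "1 \<le> m \<Longrightarrow> Tt (2 * m) 0 = s * F 0 * (\<Sum>k=1..m. complex_of_real (bernnum (2*k) / fact (2*k))
               * (Lc / (X 0 - 1)) ^ (2*k - 1) * poly (Ppoly (2*k - 1) s) (X 0))"
proof -
  assume m: "1 \<le> m"
  have "Tt (2 * m) 0 = (\<Sum>k=1..m. (-1)^(2*k-1) * complex_of_real (bernnum (2*k) / fact (2*k)) * Dr (2*k-1) 0)"
    unfolding Tt_def
  proof (rule even_reindex)
    fix k :: nat assume "1 \<le> k"
    then have "bernnum (2 * k + 1) = 0" by (intro bernnum_odd) auto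
    then show "(-1)^(2 * k + 1 - 1) * complex_of_real (bernnum (2 * k + 1) / fact (2 * k + 1)) * Dr (2 * k + 1 - 1) 0 = 0"
      by simp
  qed
  also have "\<dots> = (\<Sum>k=1..m. s * F 0 * (complex_of_real (bernnum (2*k) / fact (2*k))
               * (Lc / (X 0 - 1)) ^ (2*k - 1) * poly (Ppoly (2*k - 1) s) (X 0)))"
  proof (rule sum.cong)
    fix k assume "k \<in> {1..m}"
    then have k: "1 \<le> k" by simp
    then have "odd (2 * k - 1)" by simp
    then have "(-1::complex) ^ (2 * k - 1) = -1" by simp
    then show "(-1)^(2*k-1) * complex_of_real (bernnum (2*k) / fact (2*k)) * Dr (2*k-1) 0 = s * F 0 * (complex_of_real (bernnum (2*k) / fact (2*k))
               * (Lc / (X 0 - 1)) ^ (2*k - 1) * poly (Ppoly (2*k - 1) s) (X 0))"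
      unfolding Dr_odd0[OF k] by (simp add: mult_ac)
  qed simp
  also have "\<dots> = s * F 0 * (\<Sum>k=1..m. complex_of_real (bernnum (2*k) / fact (2*k))
               * (Lc / (X 0 - 1)) ^ (2*k - 1) * poly (Ppoly (2*k - 1) s) (X 0))"
    by (simp add: sum_distrib_left)
  finally show ?thesis .
qed

lemma ct_eq: "0 \<le> t \<Longrightarrow> even p \<Longrightarrow> ct p t = s * (complex_of_real (pbernpoly p t / fact p)
      * (complex_of_real (ln q) / (complex_of_real q powr (complex_of_real t + z) - 1)) ^ p
      * ((1 - complex_of_real q) / (1 - complex_of_real q powr (complex_of_real t + z))) powr s
      * complex_of_real q powr (s * (complex_of_real t + 1))
      * poly (Ppoly p s) (complex_of_real q powr (complex_of_real t + z)))"
proof -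
  assume t: "0 \<le> t" and p: "even p"
  have "complex_of_real q powr (s * (complex_of_real t + 1)) = exp (s * (complex_of_real t + 1) * Lc)"
    by (simp add: cpow_real[OF q0] Lc_def mult_ac)
  then show ?thesis using p
    by (simp add: ct_def Dr_def Dc_def F_def X_real[symmetric] Lc_def[symmetric] mult_ac)
qed

end

theorem proposition2:
  fixes q :: real and z s :: complex and m :: nat
  assumes "0 < q" "q < 1" "0 < Re z" "1 \<le> m" "0 < Re s"
  shows "qzeta s z q =
      - (of_real (q - q^2) powr s / (s * of_real (ln q))) * hyp2F1 s s (s + 1) (of_real q powr z)
      + 1/2 * ((of_real (q - q^2)) / (1 - of_real q powr z)) powr s
      + s * ((of_real (q - q^2)) / (1 - of_real q powr z)) powr s
          * (\<Sum>k=1..m. of_real (bernnum (2*k) / fact (2*k))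
               * (of_real (ln q) / (of_real q powr z - 1)) ^ (2*k - 1)
               * poly (Ppoly (2*k - 1) s) (of_real q powr z))
      - Rrem m s z q"
proof -
  interpret qzl q z s using assms by unfold_locales auto
  have p: "2 \<le> 2 * m" "even (2 * m)" using assms(4) by auto
  have R: "Rrem m s z q = integral {0..} (ct (2 * m))"
  proof -
    have "integral {0..} (ct (2 * m)) = integral {0..} (\<lambda>t. s * (complex_of_real (pbernpoly (2*m) t / fact (2*m))
      * (complex_of_real (ln q) / (complex_of_real q powr (complex_of_real t + z) - 1)) ^ (2*m)
      * ((1 - complex_of_real q) / (1 - complex_of_real q powr (complex_of_real t + z))) powr s
      * complex_of_real q powr (s * (complex_of_real t + 1))
      * poly (Ppoly (2*m) s) (complex_of_real q powr (complex_of_real t + z))))"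
      by (rule integral_cong) (use ct_eq p in auto)
    then show ?thesis unfolding Rrem_def by simp
  qed
  have G: "Gr 0 = of_real (q - q^2) powr s / (s * of_real (ln q)) * hyp2F1 s s (s + 1) (of_real q powr z)"
    using G0 by (simp add: Gr_def A_eq Q_eq Lc_def)
  have D: "Dr 0 0 = ((of_real (q - q^2)) / (1 - of_real q powr z)) powr s"
    using F0 by (simp add: Dr_def Dc0)
  have T: "Tt (2 * m) 0 = s * ((of_real (q - q^2)) / (1 - of_real q powr z)) powr s
          * (\<Sum>k=1..m. of_real (bernnum (2*k) / fact (2*k))
               * (of_real (ln q) / (of_real q powr z - 1)) ^ (2*k - 1)
               * poly (Ppoly (2*k - 1) s) (of_real q powr z))"
    using Tt0[OF assms(4)] by (simp add: F0 X0 Lc_def)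
  show ?thesis unfolding qzeta_eq[OF p] R G D T by simp
qed

end
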